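(* Let $G$ be a graph and $k$ a positive integer. Suppose that every graph $H$ with $\mathcal{D}_k(H)=\mathcal{D}_k(G)$ has the same multiset (up to isomorphism) of components with more than $k$ vertices as $G$. Then $G$ is $k$-deck reconstructible, i.e. every graph $H$ with $\mathcal{D}_k(H)=\mathcal{D}_k(G)$ is isomorphic to $G$.
   Context: The $k$-deck $\mathcal{D}_k(G)$ is the multiset of isomorphism classes of the induced subgraphs of $G$ on $k$ vertices. *)

theory Defs
  imports Main "HOL-Library.Multiset"
begin

type_synonym 'a graph = "'a set \<times> 'a set set"

definition wf_graph :: "'a graph \<Rightarrow> bool" where
  "wf_graph G \<longleftrightarrow> finite (fst G) \<and> (\<forall>e\<in>snd G. e \<subseteq> fst G \<and> card e = 2)"

definition adj :: "'a graph \<Rightarrow> 'a \<Rightarrow> 'a \<Rightarrow> bool" where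
  "adj G u v \<longleftrightarrow> {u, v} \<in> snd G"

definition graph_iso :: "'a graph \<Rightarrow> 'b graph \<Rightarrow> bool" where
  "graph_iso G H \<longleftrightarrow> (\<exists>f. bij_betw f (fst G) (fst H) \<and>
     (\<forall>u\<in>fst G. \<forall>v\<in>fst G. adj G u v \<longleftrightarrow> adj H (f u) (f v)))"

definition induced :: "'a graph \<Rightarrow> 'a set \<Rightarrow> 'a graph" where
  "induced G S = (S, {e \<in> snd G. e \<subseteq> S})"

definition isoclass :: "'a graph \<Rightarrow> nat graph set" where
  "isoclass G = {H. wf_graph H \<and> graph_iso G H}"

definition deck :: "nat \<Rightarrow> 'a graph \<Rightarrow> nat graph set multiset" where
  "deck k G = image_mset (\<lambda>S. isoclass (induced G S))
                (mset_set {S. S \<subseteq> fst G \<and> card S = k})"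

definition components :: "'a graph \<Rightarrow> 'a set set" where
  "components G = (\<lambda>v. {w \<in> fst G. (adj G)\<^sup>*\<^sup>* v w}) ` fst G"

definition big_components :: "nat \<Rightarrow> 'a graph \<Rightarrow> nat graph set multiset" where
  "big_components k G = image_mset (\<lambda>C. isoclass (induced G C))
                (mset_set {C \<in> components G. card C > k})"

end

theory Submission
  imports Defs
begin


lemma adj_sym: "adj G u v \<longleftrightarrow> adj G v u"
  by (simp add: adj_def insert_commute)

lemma adj_in: "wf_graph G \<Longrightarrow> adj G u v \<Longrightarrow> u \<in> fst G \<and> v \<in> fst G"
  unfolding wf_graph_def adj_def by blast

lemma adj_neq: "wf_graph G \<Longrightarrow> adj G u v \<Longrightarrow> u \<noteq> v"
  unfolding wf_graph_def adj_def by fastforce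

lemma wf_induced: "wf_graph G \<Longrightarrow> S \<subseteq> fst G \<Longrightarrow> wf_graph (induced G S)"
  unfolding wf_graph_def induced_def by (auto intro: finite_subset)

lemma fst_induced[simp]: "fst (induced G S) = S"
  by (simp add: induced_def)

lemma adj_induced: "adj (induced G S) u v \<longleftrightarrow> adj G u v \<and> u \<in> S \<and> v \<in> S"
  by (auto simp: adj_def induced_def)

lemma induced_induced: "T \<subseteq> S \<Longrightarrow> induced (induced G S) T = induced G T"
  by (auto simp: induced_def)

lemma graph_iso_refl: "graph_iso G G"
  unfolding graph_iso_def by (rule exI[of _ id]) auto

lemma graph_iso_sym: "graph_iso G H \<Longrightarrow> graph_iso H G"
  unfolding graph_iso_def
proof (elim exE conjE)
  fix f assume b: "bij_betw f (fst G) (fst H)"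
    and a: "\<forall>u\<in>fst G. \<forall>v\<in>fst G. adj G u v = adj H (f u) (f v)"
  let ?g = "inv_into (fst G) f"
  have b2: "bij_betw ?g (fst H) (fst G)" using b by (rule bij_betw_inv_into)
  have "\<forall>u\<in>fst H. \<forall>v\<in>fst H. adj H u v = adj G (?g u) (?g v)"
  proof (intro ballI)
    fix u v assume u: "u \<in> fst H" and v: "v \<in> fst H"
    have "?g u \<in> fst G" "?g v \<in> fst G" using b2 u v bij_betwE by blast+
    moreover have "f (?g u) = u" "f (?g v) = v" using b u v
      by (meson bij_betw_inv_into_right)+
    ultimately show "adj H u v = adj G (?g u) (?g v)" using a by metis
  qed
  with b2 show "\<exists>f. bij_betw f (fst H) (fst G) \<and> (\<forall>u\<in>fst H. \<forall>v\<in>fst H. adj H u v = adj G (f u) (f v))"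
    by blast
qed

lemma graph_iso_trans: "graph_iso G H \<Longrightarrow> graph_iso H K \<Longrightarrow> graph_iso G K"
  unfolding graph_iso_def
proof (elim exE conjE)
  fix f g assume b: "bij_betw f (fst G) (fst H)"
    and a: "\<forall>u\<in>fst G. \<forall>v\<in>fst G. adj G u v = adj H (f u) (f v)"
    and b': "bij_betw g (fst H) (fst K)"
    and a': "\<forall>u\<in>fst H. \<forall>v\<in>fst H. adj H u v = adj K (g u) (g v)"
  have "bij_betw (g \<circ> f) (fst G) (fst K)" using b b' by (rule bij_betw_trans)
  moreover have "\<forall>u\<in>fst G. \<forall>v\<in>fst G. adj G u v = adj K ((g \<circ> f) u) ((g \<circ> f) v)"
  proof (intro ballI)
    fix u v assume u: "u \<in> fst G" and v: "v \<in> fst G"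
    have "f u \<in> fst H" "f v \<in> fst H" using b u v bij_betwE by blast+
    then show "adj G u v = adj K ((g \<circ> f) u) ((g \<circ> f) v)" using a a' u v by simp
  qed
  ultimately show "\<exists>f. bij_betw f (fst G) (fst K) \<and> (\<forall>u\<in>fst G. \<forall>v\<in>fst G. adj G u v = adj K (f u) (f v))"
    by blast
qed

lemma graph_iso_card: "graph_iso G H \<Longrightarrow> card (fst G) = card (fst H)"
  unfolding graph_iso_def using bij_betw_same_card by blast

lemma graph_iso_finite: "graph_iso G H \<Longrightarrow> finite (fst G) \<longleftrightarrow> finite (fst H)"
  unfolding graph_iso_def using bij_betw_finite by blast

lemma iso_induced:
  assumes b: "bij_betw f (fst G) (fst H)"
    and a: "\<forall>u\<in>fst G. \<forall>v\<in>fst G. adj G u v = adj H (f u) (f v)"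
    and S: "S \<subseteq> fst G"
  shows "graph_iso (induced G S) (induced H (f ` S))"
  unfolding graph_iso_def
proof (intro exI[of _ f] conjI)
  have "inj_on f S" using b S by (meson bij_betw_imp_inj_on inj_on_subset)
  then show "bij_betw f (fst (induced G S)) (fst (induced H (f ` S)))"
    by (simp add: inj_on_imp_bij_betw)
  show "\<forall>u\<in>fst (induced G S). \<forall>v\<in>fst (induced G S).
      adj (induced G S) u v = adj (induced H (f ` S)) (f u) (f v)"
  proof (intro ballI)
    fix u v assume u: "u \<in> fst (induced G S)" and v: "v \<in> fst (induced G S)"
    then have "u \<in> S" "v \<in> S" by simp_all
    moreover then have "u \<in> fst G" "v \<in> fst G" using S by blast+
    ultimately show "adj (induced G S) u v = adj (induced H (f ` S)) (f u) (f v)"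
      using a by (simp add: adj_induced)
  qed
qed

lemma nat_copy:
  assumes "wf_graph G"
  shows "\<exists>H :: nat graph. wf_graph H \<and> graph_iso G H"
proof -
  have fin: "finite (fst G)" using assms unfolding wf_graph_def by blast
  then obtain h :: "'a \<Rightarrow> nat" where h: "bij_betw h (fst G) {0..<card (fst G)}"
    using ex_bij_betw_finite_nat by blast
  have inj: "inj_on h (fst G)" using h by (rule bij_betw_imp_inj_on)
  define H where "H = (h ` fst G, (\<lambda>e. h ` e) ` snd G)"
  have E: "\<And>e. e \<in> snd G \<Longrightarrow> e \<subseteq> fst G \<and> card e = 2" using assms unfolding wf_graph_def by blast
  have "wf_graph H"
    unfolding wf_graph_def H_def
  proof (intro conjI ballI)
    show "finite (fst (h ` fst G, (`) h ` snd G))" using fin by simp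
    fix e assume "e \<in> snd (h ` fst G, (`) h ` snd G)"
    then obtain e0 where e0: "e0 \<in> snd G" "e = h ` e0" by auto
    then show "e \<subseteq> fst (h ` fst G, (`) h ` snd G)" using E by auto
    have "e0 \<subseteq> fst G" using E e0(1) by blast
    then have "inj_on h e0" using inj inj_on_subset by blast
    then have "card e = card e0" using e0(2) card_image by blast
    then show "card e = 2" using E e0 by simp
  qed
  moreover have "graph_iso G H"
    unfolding graph_iso_def
  proof (intro exI[of _ h] conjI)
    have "fst H = h ` fst G" by (simp add: H_def)
    then show "bij_betw h (fst G) (fst H)" using inj by (simp add: inj_on_imp_bij_betw)
    show "\<forall>u\<in>fst G. \<forall>v\<in>fst G. adj G u v = adj H (h u) (h v)"
    proof (intro ballI)
      fix u v assume u: "u \<in> fst G" and v: "v \<in> fst G"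
      have "adj H (h u) (h v) \<longleftrightarrow> {h u, h v} \<in> (\<lambda>e. h ` e) ` snd G"
        by (simp add: adj_def H_def)
      also have "\<dots> \<longleftrightarrow> (\<exists>e\<in>snd G. h ` {u, v} = h ` e)"
        by (simp add: image_iff)
      also have "\<dots> \<longleftrightarrow> (\<exists>e\<in>snd G. {u, v} = e)"
      proof (intro bex_cong refl)
        fix e assume "e \<in> snd G"
        then have "e \<subseteq> fst G" using E by blast
        moreover have "{u, v} \<subseteq> fst G" using u v by blast
        ultimately show "h ` {u, v} = h ` e \<longleftrightarrow> {u, v} = e"
          using inj_on_image_eq_iff[OF inj] by blast
      qed
      finally show "adj G u v = adj H (h u) (h v)" by (simp add: adj_def)
    qed
  qed
  ultimately show ?thesis by blast
qed

lemma isoclass_eq_iff: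
  assumes "wf_graph G" "wf_graph H"
  shows "isoclass G = isoclass H \<longleftrightarrow> graph_iso G H"
proof
  assume eq: "isoclass G = isoclass H"
  obtain Z :: "nat graph" where Z: "wf_graph Z" "graph_iso G Z" using nat_copy assms(1) by blast
  then have "Z \<in> isoclass G" by (simp add: isoclass_def)
  then have "Z \<in> isoclass H" using eq by simp
  then have "graph_iso H Z" by (simp add: isoclass_def)
  then show "graph_iso G H" using Z graph_iso_sym graph_iso_trans by blast
next
  assume gh: "graph_iso G H"
  have "graph_iso G Z \<longleftrightarrow> graph_iso H Z" for Z :: "nat graph"
    using gh graph_iso_sym[OF gh] graph_iso_trans by metis
  then show "isoclass G = isoclass H"
    unfolding isoclass_def by simp
qed

definition rep :: "nat graph set \<Rightarrow> nat graph" where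
  "rep c = (SOME Y. Y \<in> c)"

lemma rep_isoclass:
  assumes "wf_graph G"
  shows "wf_graph (rep (isoclass G)) \<and> graph_iso G (rep (isoclass G))"
proof -
  obtain Z :: "nat graph" where "wf_graph Z" "graph_iso G Z" using nat_copy assms by blast
  then have "Z \<in> isoclass G" by (simp add: isoclass_def)
  then have "rep (isoclass G) \<in> isoclass G" unfolding rep_def by (rule someI)
  then show ?thesis by (simp add: isoclass_def)
qed


definition gcomp :: "'a graph \<Rightarrow> 'a \<Rightarrow> 'a set" where
  "gcomp G v = {w \<in> fst G. (adj G)\<^sup>*\<^sup>* v w}"

lemma components_comp: "components G = gcomp G ` fst G"
  by (simp add: components_def gcomp_def)

definition conn :: "'a graph \<Rightarrow> bool" where
  "conn G \<longleftrightarrow> (\<forall>u\<in>fst G. \<forall>v\<in>fst G. (adj G)\<^sup>*\<^sup>* u v)"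

lemma rtc_in: "(adj G)\<^sup>*\<^sup>* u w \<Longrightarrow> wf_graph G \<Longrightarrow> u \<in> fst G \<Longrightarrow> w \<in> fst G"
  by (induction rule: rtranclp_induct) (auto dest: adj_in)

lemma rtc_sym: "(adj G)\<^sup>*\<^sup>* u w \<Longrightarrow> (adj G)\<^sup>*\<^sup>* w u"
proof (induction rule: rtranclp_induct)
  case base then show ?case by simp
next
  case (step y z)
  then have "adj G z y" using adj_sym by metis
  then show ?case using step.IH by (meson converse_rtranclp_into_rtranclp)
qed

lemma comp_self: "v \<in> fst G \<Longrightarrow> v \<in> gcomp G v"
  by (simp add: gcomp_def)

lemma comp_eq: "w \<in> gcomp G v \<Longrightarrow> gcomp G w = gcomp G v"
proof -
  assume "w \<in> gcomp G v"
  then have vw: "(adj G)\<^sup>*\<^sup>* v w" by (simp add: gcomp_def)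
  have wv: "(adj G)\<^sup>*\<^sup>* w v" using rtc_sym[OF vw] .
  have "(adj G)\<^sup>*\<^sup>* w x \<longleftrightarrow> (adj G)\<^sup>*\<^sup>* v x" for x
    using vw wv rtranclp_trans[of "adj G" v w x] rtranclp_trans[of "adj G" w v x] by blast
  then show ?thesis unfolding gcomp_def by simp
qed

lemma comp_sub: "gcomp G v \<subseteq> fst G"
  by (auto simp: gcomp_def)

lemma comp_member: "C \<in> components G \<Longrightarrow> x \<in> C \<Longrightarrow> C = gcomp G x"
proof -
  assume C: "C \<in> components G" and x: "x \<in> C"
  then obtain v where "C = gcomp G v" unfolding components_comp by blast
  then show ?thesis using comp_eq x by metis
qed

lemma comps_disj: "C1 \<in> components G \<Longrightarrow> C2 \<in> components G \<Longrightarrow> x \<in> C1 \<Longrightarrow> x \<in> C2 \<Longrightarrow> C1 = C2"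
  using comp_member by metis

lemma comp_in_components: "v \<in> fst G \<Longrightarrow> gcomp G v \<in> components G"
  by (simp add: components_comp)

lemma components_sub: "C \<in> components G \<Longrightarrow> C \<subseteq> fst G"
  unfolding components_comp using comp_sub by (metis imageE)

lemma components_ne: "C \<in> components G \<Longrightarrow> C \<noteq> {}"
  unfolding components_comp using comp_self by (metis empty_iff imageE)

lemma finite_components: "wf_graph G \<Longrightarrow> finite (components G)"
  unfolding components_comp wf_graph_def by simp

lemma finite_component: "wf_graph G \<Longrightarrow> C \<in> components G \<Longrightarrow> finite C"
proof -
  assume "wf_graph G" "C \<in> components G"
  then have "finite (fst G)" "C \<subseteq> fst G" using components_sub[of C G] unfolding wf_graph_def by auto
  then show ?thesis by (rule finite_subset[rotated])
qed

lemma card_component_pos: "wf_graph G \<Longrightarrow> C \<in> components G \<Longrightarrow> card C > 0"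
  using finite_component components_ne card_gt_0_iff by metis

lemma adj_comp: "wf_graph G \<Longrightarrow> adj G u w \<Longrightarrow> w \<in> gcomp G u"
  unfolding gcomp_def using adj_in by fastforce

lemma adj_same_comp: "wf_graph G \<Longrightarrow> adj G u w \<Longrightarrow> gcomp G w = gcomp G u"
  using adj_comp comp_eq by metis

lemma rtc_comp:
  assumes "wf_graph G" "v \<in> fst G"
  shows "(adj G)\<^sup>*\<^sup>* v w \<Longrightarrow> (adj (induced G (gcomp G v)))\<^sup>*\<^sup>* v w"
proof (induction rule: rtranclp_induct)
  case base then show ?case by simp
next
  case (step y z)
  have yV: "y \<in> fst G" using rtc_in[OF step.hyps(1) assms] .
  have zV: "z \<in> fst G" using adj_in[OF assms(1) step.hyps(2)] by blast
  have "y \<in> gcomp G v" using yV step.hyps(1) unfolding gcomp_def by blast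
  moreover have "(adj G)\<^sup>*\<^sup>* v z" using step.hyps by (rule rtranclp.rtrancl_into_rtrancl)
  then have "z \<in> gcomp G v" using zV unfolding gcomp_def by blast
  ultimately have "adj (induced G (gcomp G v)) y z" using step.hyps(2) by (simp add: adj_induced)
  then show ?case using step.IH by (meson rtranclp.rtrancl_into_rtrancl)
qed

lemma conn_component:
  assumes "wf_graph G" "C \<in> components G"
  shows "conn (induced G C)"
proof -
  obtain v where v: "v \<in> fst G" "C = gcomp G v" using assms(2) unfolding components_comp by blast
  show ?thesis unfolding conn_def fst_induced
  proof (intro ballI)
    fix x y assume x: "x \<in> C" and y: "y \<in> C"
    have cx: "C = gcomp G x" using comp_member[OF assms(2) x] .
    have xV: "x \<in> fst G" using x components_sub[OF assms(2)] by blast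
    have "(adj G)\<^sup>*\<^sup>* x y" using y cx by (simp add: gcomp_def)
    then have "(adj (induced G (gcomp G x)))\<^sup>*\<^sup>* x y" by (rule rtc_comp[OF assms(1) xV])
    then show "(adj (induced G C))\<^sup>*\<^sup>* x y" using cx by simp
  qed
qed

lemma rtc_iso:
  assumes "wf_graph G" "bij_betw f (fst G) (fst H)"
    and a: "\<forall>u\<in>fst G. \<forall>v\<in>fst G. adj G u v = adj H (f u) (f v)"
    and u: "u \<in> fst G"
  shows "(adj G)\<^sup>*\<^sup>* u v \<Longrightarrow> (adj H)\<^sup>*\<^sup>* (f u) (f v)"
proof (induction rule: rtranclp_induct)
  case base then show ?case by simp
next
  case (step y z)
  have "y \<in> fst G" using rtc_in[OF step.hyps(1) assms(1) u] .
  moreover have "z \<in> fst G" using adj_in[OF assms(1) step.hyps(2)] by blast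
  ultimately have "adj H (f y) (f z)" using a step.hyps(2) by simp
  then show ?case using step.IH by (meson rtranclp.rtrancl_into_rtrancl)
qed

lemma conn_iso:
  assumes "wf_graph G" "graph_iso G H" "conn G"
  shows "conn H"
proof -
  obtain f where b: "bij_betw f (fst G) (fst H)"
    and a: "\<forall>u\<in>fst G. \<forall>v\<in>fst G. adj G u v = adj H (f u) (f v)"
    using assms(2) unfolding graph_iso_def by blast
  show ?thesis unfolding conn_def
  proof (intro ballI)
    fix x y assume x: "x \<in> fst H" and y: "y \<in> fst H"
    obtain u where u: "u \<in> fst G" "x = f u" using x bij_betw_imp_surj_on[OF b] by blast
    obtain v where v: "v \<in> fst G" "y = f v" using y bij_betw_imp_surj_on[OF b] by blast
    have "(adj G)\<^sup>*\<^sup>* u v" using assms(3) u(1) v(1) unfolding conn_def by blast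
    then have "(adj H)\<^sup>*\<^sup>* (f u) (f v)" by (rule rtc_iso[OF assms(1) b a u(1)])
    then show "(adj H)\<^sup>*\<^sup>* x y" using u v by simp
  qed
qed

lemma rtc_mono_induced: "(adj (induced G S))\<^sup>*\<^sup>* u v \<Longrightarrow> (adj G)\<^sup>*\<^sup>* u v"
proof (induction rule: rtranclp_induct)
  case base then show ?case by simp
next
  case (step y z)
  then show ?case by (meson adj_induced rtranclp.rtrancl_into_rtrancl)
qed

lemma conn_sub_comp:
  assumes "conn (induced G S)" "S \<subseteq> fst G" "v \<in> S"
  shows "S \<subseteq> gcomp G v"
proof
  fix w assume w: "w \<in> S"
  have "(adj (induced G S))\<^sup>*\<^sup>* v w" using assms(1) assms(3) w unfolding conn_def by simp
  then have "(adj G)\<^sup>*\<^sup>* v w" by (rule rtc_mono_induced)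
  moreover have "w \<in> fst G" using w assms(2) by blast
  ultimately show "w \<in> gcomp G v" unfolding gcomp_def by blast
qed


definition cnt :: "nat graph \<Rightarrow> 'a graph \<Rightarrow> nat" where
  "cnt F X = card {S. S \<subseteq> fst X \<and> graph_iso (induced X S) F}"

lemma cnt_le:
  assumes "wf_graph Y" "graph_iso X Y"
  shows "cnt F X \<le> cnt F Y"
proof -
  obtain f where b: "bij_betw f (fst X) (fst Y)"
    and a: "\<forall>u\<in>fst X. \<forall>v\<in>fst X. adj X u v = adj Y (f u) (f v)"
    using assms(2) unfolding graph_iso_def by blast
  have fin: "finite {S. S \<subseteq> fst Y \<and> graph_iso (induced Y S) F}"
    using assms(1) unfolding wf_graph_def by auto
  have inj: "inj_on (image f) {S. S \<subseteq> fst X \<and> graph_iso (induced X S) F}"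
    using inj_on_image_Pow[of f "fst X"] b bij_betw_def inj_on_subset
    by (smt (verit, best) Pow_iff mem_Collect_eq subsetI)
  have "image f ` {S. S \<subseteq> fst X \<and> graph_iso (induced X S) F}
        \<subseteq> {S. S \<subseteq> fst Y \<and> graph_iso (induced Y S) F}"
  proof
    fix T assume "T \<in> image f ` {S. S \<subseteq> fst X \<and> graph_iso (induced X S) F}"
    then obtain S where S: "S \<subseteq> fst X" "graph_iso (induced X S) F" "T = f ` S" by blast
    have "graph_iso (induced X S) (induced Y T)" using iso_induced[OF b a S(1)] S(3) by simp
    then have "graph_iso (induced Y T) F" using S(2) graph_iso_sym graph_iso_trans by blast
    moreover have "T \<subseteq> fst Y" using S b bij_betw_imp_surj_on by blast
    ultimately show "T \<in> {S. S \<subseteq> fst Y \<and> graph_iso (induced Y S) F}" by blast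
  qed
  then show ?thesis unfolding cnt_def using card_inj_on_le[OF inj _ fin] by blast
qed

lemma cnt_iso:
  assumes "wf_graph X" "wf_graph Y" "graph_iso X Y"
  shows "cnt F X = cnt F Y"
  using cnt_le assms graph_iso_sym le_antisym by metis

lemma count_image_mset_set:
  assumes "finite A"
  shows "count (image_mset g (mset_set A)) c = card {x\<in>A. g x = c}"
proof -
  have "count (image_mset g (mset_set A)) c = (\<Sum>y\<in>g -` {c} \<inter> A. 1)"
    using assms by (simp add: count_image_mset)
  also have "\<dots> = card (g -` {c} \<inter> A)" by simp
  also have "g -` {c} \<inter> A = {x\<in>A. g x = c}" by auto
  finally show ?thesis .
qed

lemma sum_image_mset_set:
  "finite A \<Longrightarrow> sum_mset (image_mset h (image_mset g (mset_set A))) = (\<Sum>x\<in>A. h (g x))"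
  by (simp add: sum_unfold_sum_mset image_mset.compositionality comp_def)

lemma mset_bij:
  assumes "finite A" "finite B" "image_mset f (mset_set A) = image_mset g (mset_set B)"
  shows "\<exists>h. bij_betw h A B \<and> (\<forall>x\<in>A. f x = g (h x))"
  using assms
proof (induction A arbitrary: B rule: finite_induct)
  case empty
  then have "B = {}" by (metis image_mset_is_empty_iff mset_set.infinite mset_set_empty_iff)
  then have "bij_betw (\<lambda>x. undefined) ({} :: 'a set) B" by (simp add: bij_betw_def)
  then show ?case by blast
next
  case (insert a A)
  have "f a \<in># image_mset g (mset_set B)"
    using insert.prems(2) insert.hyps by (metis image_mset_add_mset mset_set.insert union_single_eq_member)
  then obtain b where b: "b \<in> B" "g b = f a" using insert.prems(1) by auto
  have "image_mset f (mset_set A) = image_mset g (mset_set (B - {b}))"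
  proof -
    have "add_mset (f a) (image_mset f (mset_set A)) = image_mset g (mset_set B)"
      using insert by simp
    also have "mset_set B = add_mset b (mset_set (B - {b}))"
      using b insert.prems(1) by (simp add: mset_set.remove)
    finally show ?thesis using b by simp
  qed
  then obtain h where h: "bij_betw h A (B - {b})" "\<forall>x\<in>A. f x = g (h x)"
    using insert.IH insert.prems(1) by blast
  have "bij_betw (h(a := b)) (insert a A) B"
  proof -
    have "bij_betw (h(a := b)) A (B - {b})" using h(1) insert.hyps(2)
      by (metis bij_betw_cong fun_upd_other)
    moreover have "a \<notin> A" using insert.hyps(2) .
    moreover have "(h(a := b)) a \<notin> B - {b}" by simp
    ultimately have "bij_betw (h(a := b)) (A \<union> {a}) ((B - {b}) \<union> {(h(a := b)) a})"
      by (intro notIn_Un_bij_betw)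
    moreover have "A \<union> {a} = insert a A" by blast
    moreover have "(B - {b}) \<union> {(h(a := b)) a} = B" using b(1) by auto
    ultimately show ?thesis by simp
  qed
  moreover have "\<forall>x\<in>insert a A. f x = g ((h(a := b)) x)" using h(2) b insert.hyps(2) by auto
  ultimately show ?case by blast
qed


lemma card_supersets:
  assumes "finite V" "T \<subseteq> V" "card T = j" "j \<le> k"
  shows "card {S. S \<subseteq> V \<and> card S = k \<and> T \<subseteq> S} = (card V - j) choose (k - j)"
proof -
  have fT: "finite T" using assms finite_subset by blast
  have "bij_betw (\<lambda>S. S - T) {S. S \<subseteq> V \<and> card S = k \<and> T \<subseteq> S} {U. U \<subseteq> V - T \<and> card U = k - j}"
  proof (rule bij_betw_byWitness[where f' = "\<lambda>U. U \<union> T"])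
    show "\<forall>a\<in>{S. S \<subseteq> V \<and> card S = k \<and> T \<subseteq> S}. a - T \<union> T = a" by auto
    show "\<forall>a'\<in>{U. U \<subseteq> V - T \<and> card U = k - j}. a' \<union> T - T = a'" by auto
    show "(\<lambda>S. S - T) ` {S. S \<subseteq> V \<and> card S = k \<and> T \<subseteq> S} \<subseteq> {U. U \<subseteq> V - T \<and> card U = k - j}"
    proof
      fix U assume "U \<in> (\<lambda>S. S - T) ` {S. S \<subseteq> V \<and> card S = k \<and> T \<subseteq> S}"
      then obtain S where S: "S \<subseteq> V" "card S = k" "T \<subseteq> S" "U = S - T" by blast
      have "card U = card S - card T" using S(3,4) fT card_Diff_subset by blast
      then have "card U = k - j" using S(2) assms(3) by simp
      moreover have "U \<subseteq> V - T" using S by blast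
      ultimately show "U \<in> {U. U \<subseteq> V - T \<and> card U = k - j}" by blast
    qed
    show "(\<lambda>U. U \<union> T) ` {U. U \<subseteq> V - T \<and> card U = k - j} \<subseteq> {S. S \<subseteq> V \<and> card S = k \<and> T \<subseteq> S}"
    proof
      fix S assume "S \<in> (\<lambda>U. U \<union> T) ` {U. U \<subseteq> V - T \<and> card U = k - j}"
      then obtain U where U: "U \<subseteq> V - T" "card U = k - j" "S = U \<union> T" by blast
      have "finite U" using U(1) assms(1) finite_subset by blast
      moreover have "U \<inter> T = {}" using U(1) by blast
      ultimately have "card S = card U + card T" using U(3) fT card_Un_disjoint by blast
      then have "card S = k" using U(2) assms(3,4) by simp
      then show "S \<in> {S. S \<subseteq> V \<and> card S = k \<and> T \<subseteq> S}" using U assms by auto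
    qed
  qed
  then have "card {S. S \<subseteq> V \<and> card S = k \<and> T \<subseteq> S} = card {U. U \<subseteq> V - T \<and> card U = k - j}"
    by (rule bij_betw_same_card)
  also have "\<dots> = card (V - T) choose (k - j)" using assms(1) by (simp add: n_subsets)
  also have "card (V - T) = card V - j" using card_Diff_subset[OF fT assms(2)] assms(3) by simp
  finally show ?thesis .
qed

lemma kelly_sum:
  assumes wf: "wf_graph X" and F: "card (fst F) = j" and jk: "j \<le> k"
  shows "(\<Sum>S\<in>{S. S \<subseteq> fst X \<and> card S = k}. cnt F (induced X S))
         = cnt F X * ((card (fst X) - j) choose (k - j))"
proof -
  define K where "K = {S. S \<subseteq> fst X \<and> card S = k}"
  define P where "P = {T. T \<subseteq> fst X \<and> graph_iso (induced X T) F}"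
  have fV: "finite (fst X)" using wf unfolding wf_graph_def by blast
  have fK: "finite K" unfolding K_def using fV by simp
  have fP: "finite P" unfolding P_def using fV by simp
  have "(\<Sum>S\<in>K. cnt F (induced X S)) = (\<Sum>S\<in>K. card {T\<in>P. T \<subseteq> S})"
  proof (rule sum.cong)
    fix S assume "S \<in> K"
    then have "S \<subseteq> fst X" by (simp add: K_def)
    then have "{T. T \<subseteq> fst (induced X S) \<and> graph_iso (induced (induced X S) T) F} = {T\<in>P. T \<subseteq> S}"
      unfolding P_def by (auto simp: induced_induced)
    then show "cnt F (induced X S) = card {T\<in>P. T \<subseteq> S}" by (simp add: cnt_def)
  qed simp
  also have "\<dots> = (\<Sum>S\<in>K. \<Sum>T\<in>{T\<in>P. T \<subseteq> S}. 1)" by simp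
  also have "\<dots> = (\<Sum>T\<in>P. \<Sum>S\<in>{S\<in>K. T \<subseteq> S}. 1)"
    by (rule sum.swap_restrict[OF fK fP])
  also have "\<dots> = (\<Sum>T\<in>P. (card (fst X) - j) choose (k - j))"
  proof (rule sum.cong)
    fix T assume T: "T \<in> P"
    then have TX: "T \<subseteq> fst X" and TF: "graph_iso (induced X T) F" unfolding P_def by auto
    have "card T = j" using graph_iso_card[OF TF] F by simp
    note TX this
    then have "card {S. S \<subseteq> fst X \<and> card S = k \<and> T \<subseteq> S} = (card (fst X) - j) choose (k - j)"
      using card_supersets fV jk by blast
    moreover have "{S\<in>K. T \<subseteq> S} = {S. S \<subseteq> fst X \<and> card S = k \<and> T \<subseteq> S}" by (auto simp: K_def)
    ultimately show "(\<Sum>S\<in>{S\<in>K. T \<subseteq> S}. 1) = (card (fst X) - j) choose (k - j)" by simp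
  qed simp
  also have "\<dots> = cnt F X * ((card (fst X) - j) choose (k - j))"
    by (simp add: cnt_def P_def)
  finally show ?thesis unfolding K_def .
qed

lemma deck_sum:
  assumes wf: "wf_graph X"
  shows "(\<Sum>S\<in>{S. S \<subseteq> fst X \<and> card S = k}. cnt F (induced X S))
         = sum_mset (image_mset (\<lambda>c. cnt F (rep c)) (deck k X))"
proof -
  have fV: "finite (fst X)" using wf unfolding wf_graph_def by blast
  have "sum_mset (image_mset (\<lambda>c. cnt F (rep c)) (deck k X))
     = (\<Sum>S\<in>{S. S \<subseteq> fst X \<and> card S = k}. cnt F (rep (isoclass (induced X S))))"
    unfolding deck_def using fV by (simp add: sum_image_mset_set)
  also have "\<dots> = (\<Sum>S\<in>{S. S \<subseteq> fst X \<and> card S = k}. cnt F (induced X S))"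
  proof (rule sum.cong)
    fix S assume "S \<in> {S. S \<subseteq> fst X \<and> card S = k}"
    then have w: "wf_graph (induced X S)" using wf wf_induced by blast
    then show "cnt F (rep (isoclass (induced X S))) = cnt F (induced X S)"
      using rep_isoclass cnt_iso by metis
  qed simp
  finally show ?thesis by simp
qed

lemma size_deck: "wf_graph X \<Longrightarrow> size (deck k X) = card (fst X) choose k"
  unfolding deck_def wf_graph_def by (simp add: n_subsets)

lemma binom_strict_mono_n:
  assumes "0 < k" "k \<le> Suc m"
  shows "m choose k < (m + Suc d) choose k"
proof (induction d)
  case 0
  have "0 < m choose (k - 1)" using assms by simp
  then show ?case using assms by (cases k) auto
next
  case (Suc d)
  have "0 < (m + Suc d) choose (k - 1)" using assms by simp
  then have "(m + Suc d) choose k < (m + Suc (Suc d)) choose k" using assms by (cases k) auto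
  then show ?case using Suc.IH by linarith
qed

lemma binom_inj_n:
  assumes "0 < k" "k \<le> n" "m choose k = n choose k"
  shows "m = n"
proof (rule ccontr)
  assume ne: "m \<noteq> n"
  have "0 < n choose k" using assms by simp
  then have km: "k \<le> m" using assms(3) by (metis zero_less_binomial_iff)
  show False
  proof (cases "m < n")
    case True
    then obtain d where "n = m + Suc d" using less_imp_Suc_add by (metis add_Suc_right)
    then show False using binom_strict_mono_n[of k m d] assms km by simp
  next
    case False
    then obtain d where "m = n + Suc d" using ne less_imp_Suc_add by (metis add_Suc_right linorder_neqE_nat)
    then show False using binom_strict_mono_n[of k n d] assms by simp
  qed
qed

lemma kelly:
  assumes wG: "wf_graph G" and wH: "wf_graph H" and k: "0 < k" "k \<le> card (fst G)"
    and d: "deck k H = deck k G"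
    and F: "card (fst F) \<le> k"
  shows "cnt F H = cnt F G"
proof -
  have "card (fst H) choose k = card (fst G) choose k"
    using size_deck[OF wG, of k] size_deck[OF wH, of k] d by simp
  then have n: "card (fst H) = card (fst G)"
    using binom_inj_n[OF k] by blast
  define j where "j = card (fst F)"
  have jk: "j \<le> k" using F j_def by simp
  have pos: "0 < (card (fst G) - j) choose (k - j)" using k jk by simp
  have eH: "(\<Sum>S\<in>{S. S \<subseteq> fst H \<and> card S = k}. cnt F (induced H S))
         = cnt F H * ((card (fst H) - j) choose (k - j))"
    by (rule kelly_sum[OF wH j_def[symmetric] jk])
  have eG: "(\<Sum>S\<in>{S. S \<subseteq> fst G \<and> card S = k}. cnt F (induced G S))
         = cnt F G * ((card (fst G) - j) choose (k - j))"
    by (rule kelly_sum[OF wG j_def[symmetric] jk])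
  have "(\<Sum>S\<in>{S. S \<subseteq> fst H \<and> card S = k}. cnt F (induced H S))
      = (\<Sum>S\<in>{S. S \<subseteq> fst G \<and> card S = k}. cnt F (induced G S))"
    unfolding deck_sum[OF wH] deck_sum[OF wG] d ..
  then have "cnt F H * ((card (fst G) - j) choose (k - j)) = cnt F G * ((card (fst G) - j) choose (k - j))"
    using eH eG n by simp
  then show ?thesis using pos by simp
qed


definition cc :: "nat \<Rightarrow> 'a graph \<Rightarrow> nat graph set multiset" where
  "cc j X = image_mset (\<lambda>C. isoclass (induced X C)) (mset_set {C \<in> components X. card C > j})"

lemma iso_ind_card: "graph_iso (induced X S) F \<Longrightarrow> card S = card (fst F)"
  using graph_iso_card[of "induced X S" F] by simp

lemma cnt_decomp:
  assumes wf: "wf_graph X" and wF: "wf_graph F" and cF: "conn F" and cardF: "card (fst F) = Suc j"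
  shows "cnt F X = card {C\<in>components X. graph_iso (induced X C) F}
         + (\<Sum>C\<in>{C\<in>components X. card C > Suc j}. cnt F (induced X C))"
proof -
  define B where "B C = {S. S \<subseteq> C \<and> graph_iso (induced X S) F}" for C
  have fV: "finite (fst X)" using wf unfolding wf_graph_def by blast
  have fc: "finite (components X)" using finite_components[OF wf] .
  have ne: "S \<noteq> {}" if "graph_iso (induced X S) F" for S
  proof -
    have "card S = Suc j" using iso_ind_card[OF that] cardF by simp
    then show ?thesis by auto
  qed
  have A: "{S. S \<subseteq> fst X \<and> graph_iso (induced X S) F} = (\<Union>C\<in>components X. B C)"
  proof
    show "{S. S \<subseteq> fst X \<and> graph_iso (induced X S) F} \<subseteq> (\<Union>C\<in>components X. B C)"
    proof
      fix S assume "S \<in> {S. S \<subseteq> fst X \<and> graph_iso (induced X S) F}"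
      then have S: "S \<subseteq> fst X" "graph_iso (induced X S) F" by auto
      obtain v where v: "v \<in> S" using ne[OF S(2)] by blast
      have "conn (induced X S)" using conn_iso[OF wF graph_iso_sym[OF S(2)] cF] .
      then have Sv: "S \<subseteq> gcomp X v" using conn_sub_comp S(1) v by metis
      have vV: "v \<in> fst X" using v S(1) by blast
      have gc: "gcomp X v \<in> components X" by (rule comp_in_components[OF vV])
      have "S \<in> B (gcomp X v)" unfolding B_def using Sv S(2) by simp
      then show "S \<in> (\<Union>C\<in>components X. B C)" using gc by (rule UN_I[rotated])
    qed
    show "(\<Union>C\<in>components X. B C) \<subseteq> {S. S \<subseteq> fst X \<and> graph_iso (induced X S) F}"
    proof
      fix S assume "S \<in> (\<Union>C\<in>components X. B C)"
      then obtain C where C: "C \<in> components X" "S \<subseteq> C" "graph_iso (induced X S) F"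
        unfolding B_def by blast
      have "C \<subseteq> fst X" using components_sub[OF C(1)] .
      then show "S \<in> {S. S \<subseteq> fst X \<and> graph_iso (induced X S) F}" using C by blast
    qed
  qed
  have fB: "\<forall>C\<in>components X. finite (B C)"
  proof
    fix C assume "C \<in> components X"
    then have "finite C" using finite_component[OF wf] by blast
    then have "finite (Pow C)" by simp
    moreover have "B C \<subseteq> Pow C" unfolding B_def by blast
    ultimately show "finite (B C)" by (rule finite_subset[rotated])
  qed
  have dB: "\<forall>C1\<in>components X. \<forall>C2\<in>components X. C1 \<noteq> C2 \<longrightarrow> B C1 \<inter> B C2 = {}"
  proof (intro ballI impI)
    fix C1 C2 assume C: "C1 \<in> components X" "C2 \<in> components X" "C1 \<noteq> C2"
    show "B C1 \<inter> B C2 = {}"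
    proof (rule ccontr)
      assume "B C1 \<inter> B C2 \<noteq> {}"
      then obtain S where S: "S \<subseteq> C1" "S \<subseteq> C2" "graph_iso (induced X S) F" unfolding B_def by blast
      obtain v where "v \<in> S" using ne[OF S(3)] by blast
      then have "v \<in> C1" "v \<in> C2" using S by blast+
      then have "C1 = C2" using comps_disj[OF C(1) C(2)] by blast
      then show False using C(3) by blast
    qed
  qed
  have "cnt F X = card (\<Union>C\<in>components X. B C)"
    unfolding cnt_def A ..
  also have "\<dots> = (\<Sum>C\<in>components X. card (B C))"
    using card_UN_disjoint[OF fc fB dB] .
  also have "\<dots> = (\<Sum>C\<in>components X. cnt F (induced X C))"
  proof (rule sum.cong)
    fix C assume "C \<in> components X"
    have "B C = {S. S \<subseteq> fst (induced X C) \<and> graph_iso (induced (induced X C) S) F}"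
      unfolding B_def by (auto simp: induced_induced)
    then show "card (B C) = cnt F (induced X C)" unfolding cnt_def by simp
  qed simp
  also have "components X = {C\<in>components X. card C > Suc j} \<union> {C\<in>components X. \<not> card C > Suc j}"
    by blast
  also have "(\<Sum>C\<in>\<dots>. cnt F (induced X C)) = (\<Sum>C\<in>{C\<in>components X. card C > Suc j}. cnt F (induced X C))
       + (\<Sum>C\<in>{C\<in>components X. \<not> card C > Suc j}. cnt F (induced X C))"
    by (rule sum.union_disjoint) (use fc in auto)
  also have "(\<Sum>C\<in>{C\<in>components X. \<not> card C > Suc j}. cnt F (induced X C))
     = (\<Sum>C\<in>{C\<in>components X. \<not> card C > Suc j}. if graph_iso (induced X C) F then 1 else 0)"
  proof (rule sum.cong)
    fix C assume C: "C \<in> {C\<in>components X. \<not> card C > Suc j}"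
    have Cc: "C \<in> components X" using C by blast
    have Cs: "card C \<le> Suc j" using C by simp
    have fCC: "finite C" using finite_component[OF wf Cc] .
    have SC: "S = C" if "S \<subseteq> C" "graph_iso (induced X S) F" for S
    proof -
      have "card S = Suc j" using iso_ind_card[OF that(2)] cardF by simp
      then have "card C \<le> card S" using Cs by simp
      moreover have "card S \<le> card C" using card_mono[OF fCC that(1)] .
      ultimately have "card S = card C" by (rule antisym[rotated])
      then show ?thesis using card_subset_eq[OF fCC that(1)] by blast
    qed
    have "{S. S \<subseteq> fst (induced X C) \<and> graph_iso (induced (induced X C) S) F}
          = {S. S \<subseteq> C \<and> graph_iso (induced X S) F}"
    proof (rule Collect_cong)
      fix S
      show "(S \<subseteq> fst (induced X C) \<and> graph_iso (induced (induced X C) S) F) =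
            (S \<subseteq> C \<and> graph_iso (induced X S) F)"
        using induced_induced[of S C X] by auto
    qed
    also have "\<dots> = (if graph_iso (induced X C) F then {C} else {})"
    proof (cases "graph_iso (induced X C) F")
      case True
      have "{S. S \<subseteq> C \<and> graph_iso (induced X S) F} = {C}"
      proof
        show "{S. S \<subseteq> C \<and> graph_iso (induced X S) F} \<subseteq> {C}" using SC by blast
        show "{C} \<subseteq> {S. S \<subseteq> C \<and> graph_iso (induced X S) F}" using True by blast
      qed
      then show ?thesis using True by simp
    next
      case False
      have "{S. S \<subseteq> C \<and> graph_iso (induced X S) F} = {}"
      proof (rule ccontr)
        assume "{S. S \<subseteq> C \<and> graph_iso (induced X S) F} \<noteq> {}"
        then obtain S where "S \<subseteq> C" "graph_iso (induced X S) F" by blast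
        then show False using SC False by metis
      qed
      then show ?thesis using False by simp
    qed
    finally show "cnt F (induced X C) = (if graph_iso (induced X C) F then 1 else 0)"
      unfolding cnt_def by simp
  qed simp
  also have "\<dots> = card {C\<in>{C\<in>components X. \<not> card C > Suc j}. graph_iso (induced X C) F}"
  proof -
    have "finite {C\<in>components X. \<not> card C > Suc j}" using fc by simp
    then show ?thesis by (simp add: sum.inter_filter[symmetric])
  qed
  also have "{C\<in>{C\<in>components X. \<not> card C > Suc j}. graph_iso (induced X C) F}
       = {C\<in>components X. graph_iso (induced X C) F}"
  proof -
    have "\<not> card C > Suc j" if "graph_iso (induced X C) F" for C
      using iso_ind_card[OF that] cardF by simp
    then show ?thesis by blast
  qed
  finally show ?thesis by simp
qed

lemma cc_step:
  assumes "wf_graph X"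
  shows "cc j X = cc (Suc j) X + image_mset (\<lambda>C. isoclass (induced X C)) (mset_set {C\<in>components X. card C = Suc j})"
proof -
  have fc: "finite (components X)" using finite_components assms by blast
  have "{C\<in>components X. card C > j} = {C\<in>components X. card C > Suc j} \<union> {C\<in>components X. card C = Suc j}"
    by auto
  moreover have "mset_set ({C\<in>components X. card C > Suc j} \<union> {C\<in>components X. card C = Suc j})
     = mset_set {C\<in>components X. card C > Suc j} + mset_set {C\<in>components X. card C = Suc j}"
    by (rule mset_set_Union) (use fc in auto)
  ultimately have "mset_set {C\<in>components X. card C > j} = mset_set {C\<in>components X. card C > Suc j} + mset_set {C\<in>components X. card C = Suc j}"
    by simp
  then show ?thesis unfolding cc_def by simp
qed

lemma cc_sum:
  fixes F :: "nat graph"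
  assumes "wf_graph X"
  shows "(\<Sum>C\<in>{C\<in>components X. card C > j}. cnt F (induced X C)) = sum_mset (image_mset (\<lambda>c. cnt F (rep c)) (cc j X))"
proof -
  have fc: "finite (components X)" using finite_components assms by blast
  have "sum_mset (image_mset (\<lambda>c. cnt F (rep c)) (cc j X))
     = (\<Sum>C\<in>{C\<in>components X. card C > j}. cnt F (rep (isoclass (induced X C))))"
    unfolding cc_def using fc by (simp add: sum_image_mset_set)
  also have "\<dots> = (\<Sum>C\<in>{C\<in>components X. card C > j}. cnt F (induced X C))"
  proof (rule sum.cong)
    fix C assume "C \<in> {C\<in>components X. card C > j}"
    then have w: "wf_graph (induced X C)" using assms wf_induced components_sub by blast
    then show "cnt F (rep (isoclass (induced X C))) = cnt F (induced X C)"
      using rep_isoclass cnt_iso by metis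
  qed simp
  finally show ?thesis by simp
qed

lemma wf_ind_comp: "wf_graph X \<Longrightarrow> C \<in> components X \<Longrightarrow> wf_graph (induced X C)"
  using wf_induced components_sub by metis

lemma cnt_X: "wf_graph X \<Longrightarrow> count (image_mset (\<lambda>C. isoclass (induced X C)) (mset_set {C\<in>components X. card C = Suc j})) c
      = card {C\<in>{C\<in>components X. card C = Suc j}. isoclass (induced X C) = c}"
proof -
  assume wX: "wf_graph X"
  have "finite {C\<in>components X. card C = Suc j}" using finite_components[OF wX] by simp
  then show ?thesis by (rule count_image_mset_set)
qed

lemma eq_X:
  assumes wX: "wf_graph X" and F: "wf_graph F" "card (fst F) = Suc j" "c = isoclass F"
  shows "{C\<in>{C\<in>components X. card C = Suc j}. isoclass (induced X C) = c}
             = {C\<in>components X. graph_iso (induced X C) F}"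
proof (rule Collect_cong)
  fix C
  show "(C \<in> {C \<in> components X. card C = Suc j} \<and> isoclass (induced X C) = c) =
        (C \<in> components X \<and> graph_iso (induced X C) F)"
  proof (cases "C \<in> components X")
    case True
    have w: "wf_graph (induced X C)" using wf_ind_comp[OF wX True] .
    have i: "isoclass (induced X C) = c \<longleftrightarrow> graph_iso (induced X C) F"
      using isoclass_eq_iff[OF w F(1)] F(3) by simp
    have "graph_iso (induced X C) F \<Longrightarrow> card C = Suc j"
      using iso_ind_card F(2) by metis
    then show ?thesis using True i by auto
  next
    case False
    then show ?thesis by simp
  qed
qed

lemma em_X:
  assumes wX: "wf_graph X"
    and False: "\<not> (\<exists>F :: nat graph. wf_graph F \<and> conn F \<and> card (fst F) = Suc j \<and> c = isoclass F)"
  shows "{C\<in>{C\<in>components X. card C = Suc j}. isoclass (induced X C) = c} = {}"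
proof (rule ccontr)
  assume "{C\<in>{C\<in>components X. card C = Suc j}. isoclass (induced X C) = c} \<noteq> {}"
  then obtain C where C: "C \<in> components X" "card C = Suc j" "isoclass (induced X C) = c" by blast
  have w: "wf_graph (induced X C)" using wf_ind_comp[OF wX C(1)] .
  define F where "F = rep c"
  have F: "wf_graph F" "graph_iso (induced X C) F" using rep_isoclass[OF w] C(3) F_def by auto
  have "conn F" using conn_iso[OF w F(2)] conn_component[OF wX C(1)] by blast
  moreover have "card (fst F) = Suc j" using iso_ind_card[OF F(2)] C(2) by simp
  moreover have "c = isoclass F" using C(3) isoclass_eq_iff[OF w F(1)] F(2) by simp
  ultimately show False using False F(1) by blast
qed

lemma cc_down:
  assumes wG: "wf_graph G" and wH: "wf_graph H" and k: "0 < k" "k \<le> card (fst G)"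
    and d: "deck k H = deck k G" and jk: "Suc j \<le> k"
    and ccs: "cc (Suc j) H = cc (Suc j) G"
  shows "cc j H = cc j G"
proof -
  have K: "card {C\<in>components H. graph_iso (induced H C) F} = card {C\<in>components G. graph_iso (induced G C) F}"
    if F: "wf_graph F" "conn F" "card (fst F) = Suc j" for F :: "nat graph"
  proof -
    have c: "cnt F H = cnt F G" using kelly[OF wG wH k d] F(3) jk by simp
    have s: "(\<Sum>C\<in>{C\<in>components H. card C > Suc j}. cnt F (induced H C))
        = (\<Sum>C\<in>{C\<in>components G. card C > Suc j}. cnt F (induced G C))"
      unfolding cc_sum[OF wH] cc_sum[OF wG] ccs ..
    have "card {C\<in>components H. graph_iso (induced H C) F}
         + (\<Sum>C\<in>{C\<in>components H. card C > Suc j}. cnt F (induced H C))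
        = card {C\<in>components G. graph_iso (induced G C) F}
         + (\<Sum>C\<in>{C\<in>components G. card C > Suc j}. cnt F (induced G C))"
      using cnt_decomp[OF wH F] cnt_decomp[OF wG F] c by simp
    then show ?thesis using s by simp
  qed
  have small: "image_mset (\<lambda>C. isoclass (induced H C)) (mset_set {C\<in>components H. card C = Suc j})
     = image_mset (\<lambda>C. isoclass (induced G C)) (mset_set {C\<in>components G. card C = Suc j})"
  proof (rule multiset_eqI)
    fix c
    show "count (image_mset (\<lambda>C. isoclass (induced H C)) (mset_set {C\<in>components H. card C = Suc j})) c
        = count (image_mset (\<lambda>C. isoclass (induced G C)) (mset_set {C\<in>components G. card C = Suc j})) c"
    proof (cases "\<exists>F :: nat graph. wf_graph F \<and> conn F \<and> card (fst F) = Suc j \<and> c = isoclass F")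
      case True
      then obtain F :: "nat graph" where F: "wf_graph F" "conn F" "card (fst F) = Suc j" "c = isoclass F" by blast
      show ?thesis unfolding cnt_X[OF wH] cnt_X[OF wG] eq_X[OF wH F(1,3,4)] eq_X[OF wG F(1,3,4)] using K[OF F(1-3)] .
    next
      case False
      show ?thesis unfolding cnt_X[OF wH] cnt_X[OF wG] em_X[OF wH False] em_X[OF wG False] by simp
    qed
  qed
  show ?thesis using cc_step[OF wH, of j] cc_step[OF wG, of j] ccs small by simp
qed


lemma glue:
  assumes wG: "wf_graph G" and wH: "wf_graph H"
    and psi: "bij_betw \<psi> (components H) (components G)"
    and iso: "\<forall>C\<in>components H. graph_iso (induced H C) (induced G (\<psi> C))"
  shows "graph_iso H G"
proof -
  define P where "P C f \<longleftrightarrow> bij_betw f C (\<psi> C) \<and>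
      (\<forall>u\<in>C. \<forall>v\<in>C. adj (induced H C) u v = adj (induced G (\<psi> C)) (f u) (f v))" for C f
  define fC where "fC C = (SOME f. P C f)" for C
  have PC: "P C (fC C)" if "C \<in> components H" for C
  proof -
    have "graph_iso (induced H C) (induced G (\<psi> C))" using iso that by blast
    then have "\<exists>f. P C f" unfolding P_def graph_iso_def by simp
    then show ?thesis unfolding fC_def by (rule someI_ex)
  qed
  have PCb: "bij_betw (fC C) C (\<psi> C)" if "C \<in> components H" for C
    using PC[OF that] unfolding P_def by blast
  have PCa: "adj (induced H C) u v = adj (induced G (\<psi> C)) (fC C u) (fC C v)"
    if "C \<in> components H" "u \<in> C" "v \<in> C" for C u v
    using PC[OF that(1)] that(2,3) unfolding P_def by blast
  have psiG: "\<psi> C \<in> components G" if "C \<in> components H" for C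
    using bij_betwE[OF psi] that by blast
  have psi_inj: "C1 = C2" if "C1 \<in> components H" "C2 \<in> components H" "\<psi> C1 = \<psi> C2" for C1 C2
    using bij_betw_imp_inj_on[OF psi] that unfolding inj_on_def by blast
  define F where "F v = fC (gcomp H v) v" for v
  have cH: "gcomp H v \<in> components H" if "v \<in> fst H" for v
    by (rule comp_in_components[OF that])
  have Fin: "F v \<in> \<psi> (gcomp H v)" if "v \<in> fst H" for v
  proof -
    have "v \<in> gcomp H v" by (rule comp_self[OF that])
    then show ?thesis using bij_betwE[OF PCb[OF cH[OF that]]] unfolding F_def by blast
  qed
  have psiC: "\<psi> (gcomp H v) = gcomp G (F v)" if "v \<in> fst H" for v
    by (rule comp_member[OF psiG[OF cH[OF that]] Fin[OF that]])
  have inj: "inj_on F (fst H)"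
  proof (rule inj_onI)
    fix v w assume v: "v \<in> fst H" and w: "w \<in> fst H" and eq: "F v = F w"
    have "\<psi> (gcomp H v) = \<psi> (gcomp H w)" using psiC[OF v] psiC[OF w] eq by simp
    then have C: "gcomp H v = gcomp H w" using psi_inj[OF cH[OF v] cH[OF w]] by blast
    have i: "inj_on (fC (gcomp H v)) (gcomp H v)" using bij_betw_imp_inj_on[OF PCb[OF cH[OF v]]] .
    have "fC (gcomp H v) v = fC (gcomp H v) w" using eq C unfolding F_def by simp
    moreover have "v \<in> gcomp H v" by (rule comp_self[OF v])
    moreover have "w \<in> gcomp H v" using C comp_self[OF w] by simp
    ultimately show "v = w" using i unfolding inj_on_def by blast
  qed
  have surj: "F ` fst H = fst G"
  proof
    show "F ` fst H \<subseteq> fst G"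
    proof
      fix y assume "y \<in> F ` fst H"
      then obtain v where v: "v \<in> fst H" "y = F v" by blast
      have "\<psi> (gcomp H v) \<subseteq> fst G" by (rule components_sub[OF psiG[OF cH[OF v(1)]]])
      then show "y \<in> fst G" using Fin[OF v(1)] v(2) by blast
    qed
    show "fst G \<subseteq> F ` fst H"
    proof
      fix y assume y: "y \<in> fst G"
      have D: "gcomp G y \<in> components G" by (rule comp_in_components[OF y])
      then obtain C where C: "C \<in> components H" "\<psi> C = gcomp G y"
        using bij_betw_imp_surj_on[OF psi] by (metis imageE)
      have "y \<in> \<psi> C" using C(2) comp_self[OF y] by simp
      then obtain x where x: "x \<in> C" "fC C x = y"
        using bij_betw_imp_surj_on[OF PCb[OF C(1)]] by (metis imageE)
      have "gcomp H x = C" using comp_member[OF C(1) x(1)] by simp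
      then have "F x = y" using x unfolding F_def by simp
      moreover have "x \<in> fst H" using x(1) components_sub[OF C(1)] by blast
      ultimately show "y \<in> F ` fst H" by blast
    qed
  qed
  have adjs: "adj H u v = adj G (F u) (F v)" if u: "u \<in> fst H" and v: "v \<in> fst H" for u v
  proof (cases "gcomp H u = gcomp H v")
    case True
    define C where "C = gcomp H u"
    have c: "C \<in> components H" unfolding C_def by (rule cH[OF u])
    have uC: "u \<in> C" unfolding C_def by (rule comp_self[OF u])
    have vC: "v \<in> C" unfolding C_def True by (rule comp_self[OF v])
    have PP: "adj (induced H C) u v = adj (induced G (\<psi> C)) (fC C u) (fC C v)"
      by (rule PCa[OF c uC vC])
    have Fu: "F u = fC C u" unfolding F_def C_def ..
    have Fv: "F v = fC C v" unfolding F_def C_def True ..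
    have "F u \<in> \<psi> C" using Fin[OF u] unfolding C_def .
    moreover have "F v \<in> \<psi> C" using Fin[OF v] unfolding C_def True .
    ultimately show ?thesis using PP uC vC Fu Fv by (simp add: adj_induced)
  next
    case False
    have "\<not> adj H u v"
    proof
      assume "adj H u v"
      then have "gcomp H v = gcomp H u" by (rule adj_same_comp[OF wH])
      then show False using False by simp
    qed
    moreover have "\<not> adj G (F u) (F v)"
    proof
      assume "adj G (F u) (F v)"
      then have "gcomp G (F v) = gcomp G (F u)" by (rule adj_same_comp[OF wG])
      then have "\<psi> (gcomp H u) = \<psi> (gcomp H v)" using psiC[OF u] psiC[OF v] by simp
      then show False using False psi_inj[OF cH[OF u] cH[OF v]] by blast
    qed
    ultimately show ?thesis by blast
  qed
  have "bij_betw F (fst H) (fst G)" unfolding bij_betw_def using inj surj by blast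
  then show ?thesis unfolding graph_iso_def using adjs by blast
qed

lemma cc0: "wf_graph X \<Longrightarrow> {C\<in>components X. card C > 0} = components X"
proof -
  assume w: "wf_graph X"
  have "card C > 0" if "C \<in> components X" for C using card_component_pos[OF w that] .
  then show ?thesis by blast
qed

theorem lemma4p1:
  fixes G :: "'a graph" and k :: nat
  assumes "wf_graph G"
    and "0 < k"
    and "k \<le> card (fst G)"
    and "\<forall>H :: nat graph. wf_graph H \<and> deck k H = deck k G \<longrightarrow>
            big_components k H = big_components k G"
  shows "\<forall>H :: nat graph. wf_graph H \<and> deck k H = deck k G \<longrightarrow> graph_iso H G"
proof (intro allI impI)
  fix H :: "nat graph"
  assume "wf_graph H \<and> deck k H = deck k G"
  then have wH: "wf_graph H" and d: "deck k H = deck k G" by auto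
  have all: "cc (k - i) H = cc (k - i) G" if "i \<le> k" for i
    using that
  proof (induction i)
    case 0
    have "big_components k H = big_components k G" using assms(4) wH d by blast
    then show ?case by (simp add: cc_def big_components_def)
  next
    case (Suc i)
    have "cc (Suc (k - Suc i)) H = cc (Suc (k - Suc i)) G"
      using Suc by (simp add: Suc_diff_Suc)
    then show ?case using cc_down[OF assms(1) wH assms(2,3) d] Suc.prems by simp
  qed
  have "cc 0 H = cc 0 G" using all[of k] by simp
  then have me: "image_mset (\<lambda>C. isoclass (induced H C)) (mset_set (components H))
      = image_mset (\<lambda>C. isoclass (induced G C)) (mset_set (components G))"
    unfolding cc_def cc0[OF wH] cc0[OF assms(1)] .
  obtain \<psi> where psi: "bij_betw \<psi> (components H) (components G)"
    and e: "\<forall>C\<in>components H. isoclass (induced H C) = isoclass (induced G (\<psi> C))"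
    using mset_bij[OF finite_components[OF wH] finite_components[OF assms(1)] me] by blast
  have "\<forall>C\<in>components H. graph_iso (induced H C) (induced G (\<psi> C))"
  proof
    fix C assume C: "C \<in> components H"
    have pC: "\<psi> C \<in> components G" using bij_betwE[OF psi] C by blast
    have w1: "wf_graph (induced H C)" by (rule wf_ind_comp[OF wH C])
    have w2: "wf_graph (induced G (\<psi> C))" by (rule wf_ind_comp[OF assms(1) pC])
    show "graph_iso (induced H C) (induced G (\<psi> C))"
      using e C isoclass_eq_iff[OF w1 w2] by blast
  qed
  then show "graph_iso H G" by (rule glue[OF assms(1) wH psi])
qed

end
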